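(* Let $S$ be a compact metric space and $h:\mathbb{R}^d\times S\to\mathbb{R}^d$ a jointly continuous map for which there is $L>0$ with $\lVert h(x_1,y)-h(x_2,y)\rVert\le L\lVert x_1-x_2\rVert$ for all $x_1,x_2\in\mathbb{R}^d$, $y\in S$. For $c\ge1$ let $h_c(x,y):=h(cx,y)/c$; let $h_\infty(x,y)$ be the set of all $u\in\mathbb{R}^d$ with $\liminf_{c\to\infty}\lVert h_c(x,y)-u\rVert=0$; and let $H(x):=\overline{co}\big(\bigcup_{y\in S}h_\infty(x,y)\big)$ (closed convex hull). Assume (S1): whenever $c_n\uparrow\infty$, $y_n\to y$ in $S$, $x\in\mathbb{R}^d$ and $\lim_{n}h_{c_n}(x,y_n)=u$, then $u\in h_\infty(x,y)$. Then $H$ is a Marchaud map.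
   Context: A set-valued map $F:\mathbb{R}^n\to\{\text{subsets of }\mathbb{R}^m\}$ is a Marchaud map if (i) $F(x)$ is convex and compact for each $x$; (ii) there is $K>0$ with $\sup_{w\in F(x)}\lVert w\rVert<K(1+\lVert x\rVert)$ for all $x$; (iii) $F$ is upper-semicontinuous, i.e. its graph $\{(x,y):y\in F(x)\}$ is closed in $\mathbb{R}^n\times\mathbb{R}^m$. *)

theory Defs
  imports "HOL-Analysis.Analysis"
begin

definition marchaud :: "('a::euclidean_space \<Rightarrow> 'c::euclidean_space set) \<Rightarrow> bool" where
  "marchaud F \<longleftrightarrow>
     (\<forall>x. convex (F x) \<and> compact (F x)) \<and>
     (\<exists>K>0. \<forall>x. \<forall>w\<in>F x. norm w < K * (1 + norm x)) \<and>
     closed {(x, y). y \<in> F x}"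

definition hscale :: "('a::real_normed_vector \<times> 'b \<Rightarrow> 'a) \<Rightarrow> real \<Rightarrow> 'a \<Rightarrow> 'b \<Rightarrow> 'a" where
  "hscale h c x y = (1 / c) *\<^sub>R h (c *\<^sub>R x, y)"

definition hinf :: "('a::real_normed_vector \<times> 'b \<Rightarrow> 'a) \<Rightarrow> 'a \<Rightarrow> 'b \<Rightarrow> 'a set" where
  "hinf h x y = {u. Liminf at_top (\<lambda>c::real. ereal (norm (hscale h c x y - u))) = 0}"

definition Hmap :: "('a::real_normed_vector \<times> 'b \<Rightarrow> 'a) \<Rightarrow> 'b set \<Rightarrow> 'a \<Rightarrow> 'a set" where
  "Hmap h S x = closure (convex hull (\<Union>y\<in>S. hinf h x y))"

end

theory Submission
  imports Defs
begin

lemma hinf_iff: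
  "u \<in> hinf h x y \<longleftrightarrow> (\<forall>e>0. \<forall>C. \<exists>c\<ge>C. norm (hscale h c x y - u) < e)"
proof -
  let ?X = "\<lambda>c::real. ereal (norm (hscale h c x y - u))"
  have ge: "0 \<le> Liminf at_top ?X"
    by (rule Liminf_bounded) auto
  show ?thesis
  proof
    assume "u \<in> hinf h x y"
    hence L0: "Liminf at_top ?X = 0" by (simp add: hinf_def)
    show "\<forall>e>0. \<forall>C. \<exists>c\<ge>C. norm (hscale h c x y - u) < e"
    proof (intro allI impI, rule ccontr)
      fix e :: real and C assume e: "e > 0" and n: "\<not> (\<exists>c\<ge>C. norm (hscale h c x y - u) < e)"
      have ev: "eventually (\<lambda>c. ereal e \<le> ?X c) at_top"
        using n by (intro eventually_at_top_linorderI[of C]) auto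
      have "ereal e \<le> Liminf at_top ?X"
        unfolding le_Liminf_iff
      proof (intro allI impI)
        fix z assume "z < ereal e"
        show "eventually (\<lambda>c. z < ?X c) at_top"
          using ev by (rule eventually_mono) (use \<open>z < ereal e\<close> in \<open>rule less_le_trans\<close>)
      qed
      thus False using L0 e by simp
    qed
  next
    assume H: "\<forall>e>0. \<forall>C. \<exists>c\<ge>C. norm (hscale h c x y - u) < e"
    have "Liminf at_top ?X \<le> 0"
    proof (rule ccontr)
      assume "\<not> Liminf at_top ?X \<le> 0"
      hence pos: "0 < Liminf at_top ?X" by simp
      then obtain e :: real where e: "0 < e" "ereal e < Liminf at_top ?X"
        using ereal_dense2[OF pos] by (auto simp: zero_ereal_def)
      have "eventually (\<lambda>c. ereal e < ?X c) at_top" by (rule less_LiminfD[OF e(2)])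
      then obtain C where C: "\<And>c. c \<ge> C \<Longrightarrow> ereal e < ?X c"
        by (auto simp: eventually_at_top_linorder)
      from H e(1) obtain c where "c \<ge> C" "norm (hscale h c x y - u) < e" by blast
      with C[of c] show False by simp
    qed
    with ge show "u \<in> hinf h x y" by (simp add: hinf_def)
  qed
qed

lemma hscale_lip:
  assumes lip: "\<forall>x1 x2. norm (h (x1, y) - h (x2, y)) \<le> L * norm (x1 - x2)"
    and c: "c \<ge> 1"
  shows "norm (hscale h c x1 y - hscale h c x2 y) \<le> L * norm (x1 - x2)"
proof -
  have "hscale h c x1 y - hscale h c x2 y = (1/c) *\<^sub>R (h (c *\<^sub>R x1, y) - h (c *\<^sub>R x2, y))"
    by (simp add: hscale_def scaleR_diff_right)
  hence "norm (hscale h c x1 y - hscale h c x2 y) = (1/c) * norm (h (c *\<^sub>R x1, y) - h (c *\<^sub>R x2, y))"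
    using c by simp
  also have "\<dots> \<le> (1/c) * (L * norm (c *\<^sub>R x1 - c *\<^sub>R x2))"
    using lip c by (intro mult_left_mono) auto
  also have "norm (c *\<^sub>R x1 - c *\<^sub>R x2) = c * norm (x1 - x2)"
    using c by (simp add: scaleR_diff_right[symmetric])
  finally show ?thesis using c by simp
qed

lemma hscale_bound:
  fixes h :: "'a::real_normed_vector \<times> 'b \<Rightarrow> 'a"
  assumes lip: "\<forall>x1 x2. norm (h (x1, y) - h (x2, y)) \<le> L * norm (x1 - x2)"
    and c: "c \<ge> 1" and M: "norm (h (0, y)) \<le> M"
  shows "norm (hscale h c x y) \<le> M + L * norm x"
proof -
  have "norm (h (c *\<^sub>R x, y)) \<le> norm (h (0, y)) + norm (h (c *\<^sub>R x, y) - h (0, y))"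
    by (rule norm_triangle_sub)
  also have "\<dots> \<le> M + L * (c * norm x)"
    using lip[rule_format, of "c *\<^sub>R x" 0] M c by simp
  finally have *: "norm (h (c *\<^sub>R x, y)) \<le> M + L * (c * norm x)" .
  have "norm (hscale h c x y) = norm (h (c *\<^sub>R x, y)) / c"
    using c by (simp add: hscale_def)
  also have "\<dots> \<le> (M + L * (c * norm x)) / c"
    using * c by (simp add: divide_right_mono)
  also have "\<dots> = M / c + L * norm x" using c by (simp add: field_simps)
  also have "M / c \<le> M"
  proof -
    have M0: "M \<ge> 0" using M norm_ge_zero[of "h (0,y)"] by linarith
    have "M * 1 \<le> M * c" using mult_left_mono[OF c M0] .
    thus ?thesis using c by (simp add: divide_le_eq)
  qed
  finally show ?thesis by simp
qed

lemma hinf_bound: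
  fixes h :: "'a::real_normed_vector \<times> 'b \<Rightarrow> 'a"
  assumes lip: "\<forall>x1 x2. norm (h (x1, y) - h (x2, y)) \<le> L * norm (x1 - x2)"
    and M: "norm (h (0, y)) \<le> M" and u: "u \<in> hinf h x y"
  shows "norm u \<le> M + L * norm x"
proof (rule field_le_epsilon)
  fix e :: real assume e: "e > 0"
  from u[unfolded hinf_iff] e obtain c where c: "c \<ge> 1" "norm (hscale h c x y - u) < e"
    by blast
  have "norm u \<le> norm (hscale h c x y) + norm (hscale h c x y - u)"
    using norm_triangle_sub[of u "hscale h c x y"] by (simp add: norm_minus_commute)
  thus "norm u \<le> M + L * norm x + e"
    using hscale_bound[OF lip c(1) M, of x] c(2) by simp
qed

lemma perturb:
  fixes h :: "'a::euclidean_space \<times> 'b \<Rightarrow> 'a"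
  assumes lip: "\<forall>x1 x2. norm (h (x1, y) - h (x2, y)) \<le> L * norm (x1 - x2)"
    and u: "u \<in> hinf h x1 y"
  shows "\<exists>u'\<in>hinf h x2 y. norm (u - u') \<le> L * norm (x1 - x2)"
proof -
  define d where "d = L * norm (x1 - x2)"
  have "\<forall>k::nat. \<exists>c. c \<ge> real k + 1 \<and> norm (hscale h c x1 y - u) < inverse (real (Suc k))"
  proof
    fix k :: nat
    have "inverse (real (Suc k)) > 0" by simp
    with u[unfolded hinf_iff] show "\<exists>c. c \<ge> real k + 1 \<and> norm (hscale h c x1 y - u) < inverse (real (Suc k))"
      by blast
  qed
  then obtain c where c: "\<And>k. c k \<ge> real k + 1"
    "\<And>k. norm (hscale h (c k) x1 y - u) < inverse (real (Suc k))"
    by metis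
  define v where "v k = hscale h (c k) x2 y" for k
  have vu: "norm (v k - u) \<le> d + inverse (real (Suc k))" for k
  proof -
    have "norm (v k - u) \<le> norm (v k - hscale h (c k) x1 y) + norm (hscale h (c k) x1 y - u)"
      by (rule norm_diff_triangle_le) (rule order_refl)+
    moreover have "norm (v k - hscale h (c k) x1 y) \<le> d"
      unfolding v_def d_def using hscale_lip[OF lip, of "c k" x2 x1] c(1)[of k]
      by (simp add: norm_minus_commute)
    ultimately show ?thesis using c(2)[of k] by simp
  qed
  have "bounded (range v)"
  proof (rule boundedI)
    fix z assume "z \<in> range v"
    then obtain k where z: "z = v k" by auto
    have "norm (v k) \<le> norm u + norm (v k - u)"
      by (rule norm_triangle_sub)
    also have "\<dots> \<le> norm u + (d + 1)"
    proof -
      have "inverse (real (Suc k)) \<le> 1" using le_imp_inverse_le[of 1 "real (Suc k)"] by simp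
      thus ?thesis using vu[of k] by linarith
    qed
    finally show "norm z \<le> norm u + (d + 1)" using z by simp
  qed
  then obtain l r where r: "strict_mono r" and lim: "(v \<circ> r) \<longlonglongrightarrow> l"
    using bounded_imp_convergent_subsequence by blast
  have inv0: "(\<lambda>k. inverse (real (Suc (r k)))) \<longlonglongrightarrow> 0"
    using LIMSEQ_subseq_LIMSEQ[OF LIMSEQ_inverse_real_of_nat r] by (simp add: o_def)
  have "norm (u - l) \<le> d + 0"
  proof (rule tendsto_le[OF trivial_limit_sequentially])
    show "(\<lambda>k. d + inverse (real (Suc (r k)))) \<longlonglongrightarrow> d + 0"
      by (intro tendsto_intros inv0)
    show "(\<lambda>k. norm (u - (v \<circ> r) k)) \<longlonglongrightarrow> norm (u - l)"
      by (intro tendsto_intros lim)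
    show "\<forall>\<^sub>F k in sequentially. norm (u - (v \<circ> r) k) \<le> d + inverse (real (Suc (r k)))"
      using vu by (simp add: norm_minus_commute)
  qed
  moreover have "l \<in> hinf h x2 y"
    unfolding hinf_iff
  proof (intro allI impI)
    fix e :: real and C :: real assume e: "e > 0"
    from lim[unfolded LIMSEQ_iff] e obtain N where N: "\<And>k. k \<ge> N \<Longrightarrow> norm ((v \<circ> r) k - l) < e"
      by blast
    define k where "k = max N (nat \<lceil>C\<rceil>)"
    have "C \<le> real k" unfolding k_def by linarith
    also have "\<dots> \<le> real (r k)" using seq_suble[OF r, of k] by simp
    also have "\<dots> \<le> c (r k)" using c(1)[of "r k"] by simp
    finally have "C \<le> c (r k)" .
    moreover have "norm (hscale h (c (r k)) x2 y - l) < e" using N[of k] unfolding k_def v_def by simp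
    ultimately show "\<exists>c'\<ge>C. norm (hscale h c' x2 y - l) < e" by blast
  qed
  ultimately show ?thesis unfolding d_def by auto
qed

theorem lemma2:
  fixes h :: "'a::euclidean_space \<times> 'b::metric_space \<Rightarrow> 'a"
    and S :: "'b set" and L :: real
  assumes "compact S"
    and "continuous_on (UNIV \<times> S) h"
    and "L > 0"
    and "\<forall>x1 x2. \<forall>y\<in>S. norm (h (x1, y) - h (x2, y)) \<le> L * norm (x1 - x2)"
    and S1: "\<And>(c::nat \<Rightarrow> real) (ys::nat \<Rightarrow> 'b) y x u.
       mono c \<Longrightarrow> filterlim c at_top sequentially \<Longrightarrow> (\<forall>n. c n \<ge> 1) \<Longrightarrow>
       (\<forall>n. ys n \<in> S) \<Longrightarrow> y \<in> S \<Longrightarrow> ys \<longlonglongrightarrow> y \<Longrightarrow>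
       (\<lambda>n. hscale h (c n) x (ys n)) \<longlonglongrightarrow> u \<Longrightarrow> u \<in> hinf h x y"
  shows "marchaud (Hmap h S)"
proof -
  have lip: "\<And>y. y \<in> S \<Longrightarrow> \<forall>x1 x2. norm (h (x1, y) - h (x2, y)) \<le> L * norm (x1 - x2)"
    using assms(4) by blast
  have "continuous_on S (\<lambda>y. h (0, y))"
    by (rule continuous_on_compose2[OF assms(2)]) (auto intro!: continuous_intros)
  hence "compact ((\<lambda>y. h (0, y)) ` S)" using assms(1) by (rule compact_continuous_image)
  hence "bounded ((\<lambda>y. h (0, y)) ` S)" by (rule compact_imp_bounded)
  then obtain M where M: "\<And>y. y \<in> S \<Longrightarrow> norm (h (0, y)) \<le> M"
    by (auto simp: bounded_iff)
  define M' where "M' = max M 0"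
  have M': "\<And>y. y \<in> S \<Longrightarrow> norm (h (0, y)) \<le> M'" "M' \<ge> 0"
    using M unfolding M'_def by (auto simp: le_max_iff_disj)
  have Hsub: "Hmap h S x \<subseteq> cball 0 (M' + L * norm x)" for x
  proof -
    have "(\<Union>y\<in>S. hinf h x y) \<subseteq> cball 0 (M' + L * norm x)"
      using hinf_bound[OF lip M'(1)] by auto
    hence "convex hull (\<Union>y\<in>S. hinf h x y) \<subseteq> cball 0 (M' + L * norm x)"
      by (intro hull_minimal) auto
    thus ?thesis unfolding Hmap_def by (intro closure_minimal) auto
  qed
  have cpt: "compact (Hmap h S x)" for x
  proof -
    have "bounded (\<Union>y\<in>S. hinf h x y)"
      by (rule bounded_subset[of "cball 0 (M' + L * norm x)"])
        (use hinf_bound[OF lip M'(1)] in auto)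
    thus ?thesis unfolding Hmap_def by (simp add: compact_closure bounded_convex_hull)
  qed
  have cvx: "convex (Hmap h S x)" for x
    unfolding Hmap_def by (intro convex_closure convex_convex_hull)
  have growth: "\<forall>x. \<forall>w\<in>Hmap h S x. norm w < (M' + L + 1) * (1 + norm x)"
  proof (intro allI ballI)
    fix x w assume "w \<in> Hmap h S x"
    with Hsub[of x] have "norm w \<le> M' + L * norm x" by (auto simp: subset_iff)
    also have "\<dots> < (M' + L + 1) * (1 + norm x)"
    proof -
      have e: "(M' + L + 1) * (1 + norm x) = M' + L + 1 + M' * norm x + L * norm x + norm x"
        by (simp add: algebra_simps)
      show ?thesis using e M'(2) assms(3) norm_ge_zero[of x] mult_nonneg_nonneg[OF M'(2) norm_ge_zero[of x]]
        by linarith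
    qed
    finally show "norm w < (M' + L + 1) * (1 + norm x)" .
  qed
  have close: "\<exists>v\<in>Hmap h S x2. norm (w - v) \<le> L * norm (x1 - x2)"
    if w: "w \<in> Hmap h S x1" for x1 x2 w
  proof -
    define T where "T = {a + b | a b. a \<in> Hmap h S x2 \<and> b \<in> cball 0 (L * norm (x1 - x2))}"
    have "compact T" unfolding T_def by (intro compact_sums cpt compact_cball)
    hence clT: "closed T" by (rule compact_imp_closed)
    have "T = (\<Union>a\<in>Hmap h S x2. \<Union>b\<in>cball 0 (L * norm (x1 - x2)). {a + b})"
    proof (rule set_eqI, rule iffI)
      fix z assume "z \<in> T"
      then obtain a b where "a \<in> Hmap h S x2" "b \<in> cball 0 (L * norm (x1 - x2))" "z = a + b"
        unfolding T_def by blast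
      thus "z \<in> (\<Union>a\<in>Hmap h S x2. \<Union>b\<in>cball 0 (L * norm (x1 - x2)). {a + b})"
        by blast
    next
      fix z assume "z \<in> (\<Union>a\<in>Hmap h S x2. \<Union>b\<in>cball 0 (L * norm (x1 - x2)). {a + b})"
      then obtain a b where "a \<in> Hmap h S x2" "b \<in> cball 0 (L * norm (x1 - x2))" "z = a + b"
        by blast
      thus "z \<in> T" unfolding T_def by (intro CollectI exI[of _ a] exI[of _ b] conjI) auto
    qed
    hence cvT: "convex T" by (simp add: convex_sums cvx)
    have "(\<Union>y\<in>S. hinf h x1 y) \<subseteq> T"
    proof
      fix u assume "u \<in> (\<Union>y\<in>S. hinf h x1 y)"
      then obtain y where y: "y \<in> S" "u \<in> hinf h x1 y" by auto
      from perturb[OF lip[OF y(1)] y(2), of x2] obtain u' where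
        u': "u' \<in> hinf h x2 y" "norm (u - u') \<le> L * norm (x1 - x2)" by blast
      have "u' \<in> (\<Union>y\<in>S. hinf h x2 y)" using u' y(1) by blast
      hence "u' \<in> convex hull (\<Union>y\<in>S. hinf h x2 y)" by (rule hull_inc)
      hence "u' \<in> Hmap h S x2" unfolding Hmap_def by (rule subsetD[OF closure_subset])
      moreover have "u - u' \<in> cball 0 (L * norm (x1 - x2))" using u' by simp
      ultimately show "u \<in> T" unfolding T_def
        by (intro CollectI exI[of _ u'] exI[of _ "u - u'"] conjI) auto
    qed
    hence "convex hull (\<Union>y\<in>S. hinf h x1 y) \<subseteq> T" using cvT by (intro hull_minimal) auto
    hence "Hmap h S x1 \<subseteq> T" unfolding Hmap_def using clT by (intro closure_minimal) auto
    with w have "w \<in> T" by (rule subsetD[rotated])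
    then obtain a b where "w = a + b" "a \<in> Hmap h S x2" "b \<in> cball 0 (L * norm (x1 - x2))"
      unfolding T_def by (auto simp only: mem_Collect_eq)
    thus ?thesis by (intro bexI[of _ a]) simp_all
  qed
  have graph: "closed {(x, y). y \<in> Hmap h S x}"
    unfolding closed_sequential_limits
  proof (intro allI impI, elim conjE)
    fix p :: "nat \<Rightarrow> 'a \<times> 'a" and l assume p: "\<forall>n. p n \<in> {(x, y). y \<in> Hmap h S x}"
      and lim: "p \<longlonglongrightarrow> l"
    have fl: "(\<lambda>n. fst (p n)) \<longlonglongrightarrow> fst l" and sl: "(\<lambda>n. snd (p n)) \<longlonglongrightarrow> snd l"
      using tendsto_fst[OF lim] tendsto_snd[OF lim] by simp_all
    have "\<forall>n. \<exists>v. v \<in> Hmap h S (fst l) \<and> norm (snd (p n) - v) \<le> L * norm (fst (p n) - fst l)"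
    proof
      fix n
      have "snd (p n) \<in> Hmap h S (fst (p n))" using p[rule_format, of n] by (simp add: case_prod_beta)
      from close[OF this, of "fst l"] show "\<exists>v. v \<in> Hmap h S (fst l) \<and> norm (snd (p n) - v) \<le> L * norm (fst (p n) - fst l)"
        by blast
    qed
    then obtain v where "\<forall>n. v n \<in> Hmap h S (fst l) \<and> norm (snd (p n) - v n) \<le> L * norm (fst (p n) - fst l)"
      by (rule choice[THEN exE])
    hence v: "\<And>n. v n \<in> Hmap h S (fst l)"
      "\<And>n. norm (snd (p n) - v n) \<le> L * norm (fst (p n) - fst l)" by auto
    have "(\<lambda>n. L * norm (fst (p n) - fst l)) \<longlonglongrightarrow> L * norm (fst l - fst l)"
      by (intro tendsto_intros fl)
    hence g0: "(\<lambda>n. L * norm (fst (p n) - fst l)) \<longlonglongrightarrow> 0" by simp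
    have z: "(\<lambda>n. snd (p n) - v n) \<longlonglongrightarrow> 0"
      by (rule Lim_null_comparison[OF _ g0]) (use v(2) in simp)
    have "(\<lambda>n. snd (p n) - (snd (p n) - v n)) \<longlonglongrightarrow> snd l - 0"
      by (intro tendsto_intros sl z)
    hence "v \<longlonglongrightarrow> snd l" by simp
    moreover have "closed (Hmap h S (fst l))" by (rule compact_imp_closed[OF cpt])
    ultimately have "snd l \<in> Hmap h S (fst l)"
      using v(1) unfolding closed_sequential_limits by blast
    thus "l \<in> {(x, y). y \<in> Hmap h S x}" by (simp add: case_prod_beta)
  qed
  have K: "M' + L + 1 > 0" using assms(3) M'(2) by linarith
  show ?thesis unfolding marchaud_def
  proof (intro conjI allI)
    fix x show "convex (Hmap h S x)" by (rule cvx)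
  next
    fix x show "compact (Hmap h S x)" by (rule cpt)
  next
    show "\<exists>K>0. \<forall>x. \<forall>w\<in>Hmap h S x. norm w < K * (1 + norm x)"
      using K growth by blast
  qed (rule graph)
qed

end
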